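(* For every permutation $\sigma$ and every Cayley permutation $y$, $$\mathcal{F}(\sigma)=\gamma\bigl(\mathrm{Modasc}[\sigma^{-1}]\bigr)\qquad\text{and}\qquad \gamma\bigl(\mathrm{Modasc}[y]\bigr)=\mathcal{F}\bigl(\gamma(y)\bigr).$$ In other words, the set of Fishburn permutations avoiding $\sigma$ is the image under $\gamma$ of the set of modified ascent sequences avoiding every Cayley permutation in the class $[\sigma^{-1}]$.
   Context: A Cayley permutation of length $n$ is a word $x=x(1)\cdots x(n)$ of positive integers in which every integer from $1$ to $\max(x)$ occurs (the empty word is the unique one of length $0$); $\mathrm{Cay}_n$ is the set of these and $\mathrm{Cay}=\bigcup_n\mathrm{Cay}_n$. Permutations of $[n]$ (in one-line notation) are exactly the Cayley permutations without repeated letters; $\mathcal{S}$ denotes the set of all permutations. A Cayley permutation $y$ of length $k$ is contained in $x$ of length $n$ (written $y\le x$) if there are indices $i_1<\dots<i_k$ with $x(i_s)<x(i_t)\iff y(s)<y(t)$ and $x(i_s)=x(i_t)\iff y(s)=y(t)$ for all $s,t$; otherwise $x$ avoids $y$. For $E\subseteq\mathrm{Cay}$ and a set $P$ of patterns, $E(P)$ is the set of elements of $E$ avoiding every pattern in $P$. For $x\in\mathrm{Cay}_n$, $\gamma(x)\in\mathcal{S}_n$ is obtained by sorting the pairs $(x(i),i)$, $i=1,\dots,n$, in increasing order of first coordinate, breaking ties by decreasing order of second coordinate, and reading off the second coordinates. (For a permutation $\pi$, $\gamma(\pi)=\pi^{-1}$.) Write $x\sim y$ iff $\gamma(x)=\gamma(y)$,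 and let $[y]$ be the equivalence class of $y$. For $E\subseteq\mathrm{Cay}$ and $y\in\mathrm{Cay}$, $E[y]$ denotes the set of $x\in E$ that avoid every element of $[y]$; $\gamma(E)=\{\gamma(x):x\in E\}$. Modified ascent sequences: $\mathrm{Modasc}_0=\{\text{empty word}\}$, $\mathrm{Modasc}_1=\{1\}$, and for $n\ge2$, $x\in\mathrm{Modasc}_n$ iff there is $v\in\mathrm{Modasc}_{n-1}$ with last letter $b$ such that either $x=va$ with $1\le a\le b$, or $x=\tilde v a$ with $b<a\le 2+\mathrm{asc}(v)$, where $\mathrm{asc}(v)$ is the number of $i$ with $v(i)<v(i+1)$ and $\tilde v$ is obtained from $v$ by increasing by one every entry $c\ge a$. $\mathrm{Modasc}=\bigcup_n\mathrm{Modasc}_n\subseteq\mathrm{Cay}$. Fishburn permutations: a permutation $\pi$ of $[n]$ is Fishburn if there are no indices $i$ and $k>i+1$ with $\pi(i)<\pi(i+1)$ and $\pi(k)=\pi(i)-1$ (i.e. $\pi$ avoids the bivincular pattern $(231,\{1\},\{1\})$). $\mathcal{F}$ is the set of Fishburn permutations, and $\mathcal{F}(\sigma)$ the set of those avoiding $\sigma$. (The restriction of $\gamma$ to $\mathrm{Modasc}$ is a bijection onto $\mathcal{F}$.) *)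

theory Defs
  imports Main "HOL-Library.Product_Lexorder"
begin

text \<open>Words are lists of naturals; position i (0-based) of the list is x(i+1).\<close>

definition cay :: "nat list \<Rightarrow> bool" where
  "cay x \<longleftrightarrow> 0 \<notin> set x \<and> (\<forall>k. 1 \<le> k \<and> k \<le> Max (insert 0 (set x)) \<longrightarrow> k \<in> set x)"

definition Cay :: "nat list set" where
  "Cay = {x. cay x}"

definition is_perm :: "nat list \<Rightarrow> bool" where
  "is_perm x \<longleftrightarrow> cay x \<and> distinct x"

definition contains :: "nat list \<Rightarrow> nat list \<Rightarrow> bool" where
  "contains y x \<longleftrightarrow> (\<exists>is. length is = length y \<and> sorted_wrt (<) is \<and> (\<forall>j\<in>set is. j < length x) \<and>
     (\<forall>s<length y. \<forall>t<length y.
        (x ! (is ! s) < x ! (is ! t) \<longleftrightarrow> y ! s < y ! t) \<and>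
        (x ! (is ! s) = x ! (is ! t) \<longleftrightarrow> y ! s = y ! t)))"

definition avoids :: "nat list \<Rightarrow> nat list \<Rightarrow> bool" where
  "avoids x y \<longleftrightarrow> \<not> contains y x"

text \<open>gamma: sort pairs (x(i), i) by first coordinate increasingly, ties by decreasing i,
  and read off the (1-based) indices.\<close>
definition gamma :: "nat list \<Rightarrow> nat list" where
  "gamma x = map Suc (sort_key (\<lambda>i. (x ! i, length x - i)) [0..<length x])"

definition cls :: "nat list \<Rightarrow> nat list set" where
  "cls y = {z \<in> Cay. gamma z = gamma y}"

definition avoid_cls :: "nat list set \<Rightarrow> nat list \<Rightarrow> nat list set" where
  "avoid_cls E y = {x \<in> E. \<forall>z \<in> cls y. avoids x z}"

definition perm_inv :: "nat list \<Rightarrow> nat list" where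
  "perm_inv p = map (\<lambda>j. Suc (THE i. i < length p \<and> p ! i = j)) [1..<Suc (length p)]"

definition asc :: "nat list \<Rightarrow> nat" where
  "asc v = card {i. Suc i < length v \<and> v ! i < v ! Suc i}"

definition incr_from :: "nat \<Rightarrow> nat list \<Rightarrow> nat list" where
  "incr_from a v = map (\<lambda>c. if a \<le> c then c + 1 else c) v"

fun modasc :: "nat \<Rightarrow> nat list set" where
  "modasc 0 = {[]}"
| "modasc (Suc 0) = {[1]}"
| "modasc (Suc (Suc n)) = {x. \<exists>v \<in> modasc (Suc n). \<exists>a.
      (1 \<le> a \<and> a \<le> last v \<and> x = v @ [a]) \<or>
      (last v < a \<and> a \<le> 2 + asc v \<and> x = incr_from a v @ [a])}"

definition Modasc :: "nat list set" where
  "Modasc = (\<Union>n. modasc n)"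

definition fishburn :: "nat list \<Rightarrow> bool" where
  "fishburn p \<longleftrightarrow> is_perm p \<and>
     \<not> (\<exists>i k. Suc i < k \<and> k < length p \<and> p ! i < p ! Suc i \<and> p ! k + 1 = p ! i)"

definition Fish_av :: "nat list \<Rightarrow> nat list set" where
  "Fish_av \<sigma> = {p. fishburn p \<and> avoids p \<sigma>}"

end

theory Submission
  imports Defs
begin

definition kk :: "nat list \<Rightarrow> nat \<Rightarrow> nat \<times> nat" where
  "kk x i = (x ! i, length x - i)"

definition Lx :: "nat list \<Rightarrow> nat list" where
  "Lx x = sort_key (kk x) [0..<length x]"

lemma gamma_Lx: "gamma x = map Suc (Lx x)"
  unfolding gamma_def Lx_def kk_def by simp

lemma kk_less: "i < length x \<Longrightarrow> j < length x \<Longrightarrow>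
   kk x i < kk x j \<longleftrightarrow> x ! i < x ! j \<or> (x ! i = x ! j \<and> j < i)"
  unfolding kk_def by auto

lemma kk_inj: "inj_on (kk x) {0..<length x}"
  unfolding inj_on_def kk_def by auto

lemma Lx_set: "set (Lx x) = {0..<length x}"
  unfolding Lx_def by simp

lemma Lx_length: "length (Lx x) = length x"
  unfolding Lx_def by simp

lemma Lx_distinct: "distinct (Lx x)"
  unfolding Lx_def by simp

lemma Lx_sorted: "sorted_wrt (\<lambda>i j. kk x i < kk x j) (Lx x)"
proof -
  have "sorted (map (kk x) (Lx x))" unfolding Lx_def by simp
  moreover have "distinct (map (kk x) (Lx x))"
    using Lx_distinct Lx_set kk_inj by (simp add: distinct_map)
  ultimately have "sorted_wrt (<) (map (kk x) (Lx x))" by (simp add: strict_sorted_iff)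
  then show ?thesis by (simp add: sorted_wrt_map)
qed

lemma Lx_unique:
  assumes "distinct L" "set L = {0..<length x}" "sorted_wrt (\<lambda>i j. kk x i < kk x j) L"
  shows "L = Lx x"
proof -
  have 1: "sorted_wrt (<) (map (kk x) L)" using assms(3) by (simp add: sorted_wrt_map)
  have 2: "sorted_wrt (<) (map (kk x) (Lx x))" using Lx_sorted by (simp add: sorted_wrt_map)
  have "map (kk x) L = map (kk x) (Lx x)"
    apply (rule sorted_distinct_set_unique)
    using 1 2 by (auto simp add: strict_sorted_iff assms(2) Lx_set)
  then show ?thesis using kk_inj assms(2) Lx_set by (simp add: inj_on_map_eq_map)
qed

lemma sorted_wrt_less_iff:
  fixes f :: "nat \<Rightarrow> 'b::linorder"
  assumes "sorted_wrt (\<lambda>i j. f i < f j) L" "s < length L" "t < length L"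
  shows "s < t \<longleftrightarrow> f (L ! s) < f (L ! t)"
proof
  assume "s < t" then show "f (L ! s) < f (L ! t)" using assms sorted_wrt_nth_less by fastforce
next
  assume h: "f (L ! s) < f (L ! t)"
  show "s < t"
  proof (rule ccontr)
    assume "\<not> s < t"
    then have "t < s \<or> t = s" by auto
    then show False
    proof
      assume "t < s" then have "f (L ! t) < f (L ! s)" using assms sorted_wrt_nth_less by fastforce
      then show False using h by simp
    qed (use h in simp)
  qed
qed

lemma Lx_less_iff: "s < length x \<Longrightarrow> t < length x \<Longrightarrow> s < t \<longleftrightarrow> kk x (Lx x ! s) < kk x (Lx x ! t)"
  using sorted_wrt_less_iff[OF Lx_sorted] Lx_length by metis

lemma Lx_nth_lt: "s < length x \<Longrightarrow> Lx x ! s < length x"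
  using Lx_set Lx_length by (metis atLeastLessThan_iff nth_mem)

definition fo :: "nat list \<Rightarrow> nat \<Rightarrow> bool" where
  "fo x p \<longleftrightarrow> (\<forall>p'<p. x ! p' \<noteq> x ! p)"

definition good :: "nat list \<Rightarrow> bool" where
  "good x \<longleftrightarrow> cay x \<and> (x \<noteq> [] \<longrightarrow> Max (insert 0 (set x)) = Suc (asc x)) \<and>
     (\<forall>p<length x. fo x p \<longleftrightarrow> (p = 0 \<or> x ! (p - 1) < x ! p))"

lemma modasc_length: "x \<in> modasc n \<Longrightarrow> length x = n"
  by (induction n arbitrary: x rule: modasc.induct) (auto simp: incr_from_def)

lemma Max_ins_eq: "finite S \<Longrightarrow> (\<forall>s\<in>S. s \<le> m) \<Longrightarrow> m \<in> insert 0 S \<Longrightarrow> Max (insert 0 S) = (m::nat)"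
  by (intro Max_eqI) auto

lemma le_Max_ins: "finite S \<Longrightarrow> s \<in> S \<Longrightarrow> s \<le> Max (insert (0::nat) S)"
  by simp

lemma asc_snoc:
  assumes "v \<noteq> []"
  shows "asc (v @ [a]) = asc v + (if last v < a then 1 else 0)"
proof -
  have e: "{i. Suc i < length (v @ [a]) \<and> (v @ [a]) ! i < (v @ [a]) ! Suc i} =
        {i. Suc i < length v \<and> v ! i < v ! Suc i} \<union> (if last v < a then {length v - 1} else {})"
  proof (intro set_eqI iffI)
    fix i assume "i \<in> {i. Suc i < length (v @ [a]) \<and> (v @ [a]) ! i < (v @ [a]) ! Suc i}"
    then have i: "Suc i < Suc (length v)" "(v @ [a]) ! i < (v @ [a]) ! Suc i" by auto
    show "i \<in> {i. Suc i < length v \<and> v ! i < v ! Suc i} \<union> (if last v < a then {length v - 1} else {})"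
    proof (cases "Suc i < length v")
      case True then show ?thesis using i by (simp add: nth_append)
    next
      case False
      then have "i = length v - 1" using i by simp
      then show ?thesis using i assms by (simp add: nth_append last_conv_nth)
    qed
  next
    fix i assume "i \<in> {i. Suc i < length v \<and> v ! i < v ! Suc i} \<union> (if last v < a then {length v - 1} else {})"
    then consider "Suc i < length v \<and> v ! i < v ! Suc i" | "last v < a \<and> i = length v - 1"
      by (auto split: if_splits)
    then show "i \<in> {i. Suc i < length (v @ [a]) \<and> (v @ [a]) ! i < (v @ [a]) ! Suc i}"
    proof cases
      case 1 then show ?thesis by (simp add: nth_append)
    next
      case 2 then show ?thesis using assms by (simp add: nth_append last_conv_nth)
    qed
  qed
  have f: "finite {i. Suc i < length v \<and> v ! i < v ! Suc i}"
    by (rule finite_subset[of _ "{..<length v}"]) auto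
  have d: "length v - 1 \<notin> {i. Suc i < length v \<and> v ! i < v ! Suc i}" by auto
  show ?thesis unfolding asc_def e using f d by (auto simp: card_insert_if)
qed

lemma asc_incr: "asc (incr_from a v) = asc v"
  unfolding asc_def incr_from_def by (rule arg_cong[where f=card]) (auto split: if_splits)

lemma fo_clause_snoc:
  assumes hv: "\<forall>p<length v. fo v p \<longleftrightarrow> (p = 0 \<or> v ! (p - 1) < v ! p)"
    and len: "length w = length v"
    and iso: "\<forall>i<length v. \<forall>j<length v. (w ! i = w ! j \<longleftrightarrow> v ! i = v ! j) \<and> (w ! i < w ! j \<longleftrightarrow> v ! i < v ! j)"
    and ne: "v \<noteq> []"
    and la: "a \<notin> set w \<longleftrightarrow> last w < a"
  shows "\<forall>p<length (w @ [a]). fo (w @ [a]) p \<longleftrightarrow> (p = 0 \<or> (w @ [a]) ! (p - 1) < (w @ [a]) ! p)"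
proof (intro allI impI)
  fix p assume p: "p < length (w @ [a])"
  show "fo (w @ [a]) p \<longleftrightarrow> (p = 0 \<or> (w @ [a]) ! (p - 1) < (w @ [a]) ! p)"
  proof (cases "p < length v")
    case True
    have "fo (w @ [a]) p \<longleftrightarrow> fo v p"
      unfolding fo_def using True iso len by (auto simp: nth_append)
    moreover have "(w @ [a]) ! (p - 1) < (w @ [a]) ! p \<longleftrightarrow> v ! (p - 1) < v ! p" if "p \<noteq> 0"
      using True iso len that by (auto simp: nth_append)
    ultimately show ?thesis using hv True by auto
  next
    case False
    then have pn: "p = length v" using p len by simp
    have "fo (w @ [a]) p \<longleftrightarrow> a \<notin> set w"
      unfolding fo_def pn using len by (auto simp: nth_append in_set_conv_nth)
    moreover have "w \<noteq> []" using len ne by auto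
    then have "(w @ [a]) ! (p - 1) = last w"
      using pn len ne by (simp add: nth_append last_conv_nth)
    moreover have "p \<noteq> 0" using pn ne by simp
    ultimately show ?thesis using la pn len by (simp add: nth_append)
  qed
qed

lemma good_one: "good [1]"
  unfolding good_def cay_def fo_def asc_def by auto

lemma good_step1:
  assumes g: "good v" and ne: "v \<noteq> []" and a1: "1 \<le> a" and al: "a \<le> last v"
  shows "good (v @ [a])"
proof -
  have cv: "cay v" using g good_def by blast
  have "last v \<in> set v" using ne by simp
  then have "last v \<le> Max (insert 0 (set v))" by simp
  then have "a \<in> set v" using cv a1 al unfolding cay_def by auto
  then have sx: "set (v @ [a]) = set v" by auto
  have asc: "asc (v @ [a]) = asc v" using asc_snoc[OF ne] al by simp
  have fo: "\<forall>p<length (v @ [a]). fo (v @ [a]) p \<longleftrightarrow> (p = 0 \<or> (v @ [a]) ! (p - 1) < (v @ [a]) ! p)"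
    apply (rule fo_clause_snoc[where v=v])
    using g ne al \<open>a \<in> set v\<close> unfolding good_def by auto
  show ?thesis unfolding good_def using g ne fo sx asc unfolding good_def cay_def by simp
qed

lemma good_step2:
  assumes g: "good v" and ne: "v \<noteq> []" and al: "last v < a" and a2: "a \<le> 2 + asc v"
  shows "good (incr_from a v @ [a])"
proof -
  define f where "f = (\<lambda>c::nat. if a \<le> c then c + 1 else c)"
  define w where "w = incr_from a v"
  have wf: "w = map f v" unfolding w_def incr_from_def f_def by simp
  have cv: "cay v" using g good_def by blast
  define M where "M = Max (insert 0 (set v))"
  have MS: "M = Suc (asc v)" using g ne unfolding good_def M_def by simp
  have aM: "a \<le> Suc M" using a2 MS by simp
  have vM: "\<forall>c\<in>set v. c \<le> M" unfolding M_def by simp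
  have Mv: "M \<in> set v"
  proof -
    have "M \<in> insert 0 (set v)" unfolding M_def by (rule Max_in) auto
    moreover have "M \<noteq> 0" using MS by simp
    ultimately show ?thesis by simp
  qed
  have v0: "0 \<notin> set v" using cv cay_def by blast
  have vall: "\<And>k. 1 \<le> k \<Longrightarrow> k \<le> M \<Longrightarrow> k \<in> set v" using cv unfolding cay_def M_def by blast
  have a1: "a \<ge> 1" using al by simp
  have bnd: "\<forall>c\<in>set (w @ [a]). c \<le> Suc M" using vM aM unfolding wf f_def by auto
  have SM: "Suc M \<in> set (w @ [a])"
  proof (cases "a = Suc M")
    case True then show ?thesis by simp
  next
    case False
    then have "a \<le> M" using aM by simp
    then have "f M = Suc M" unfolding f_def by simp
    then show ?thesis using Mv unfolding wf by force
  qed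
  have Mx: "Max (insert 0 (set (w @ [a]))) = Suc M"
    by (rule Max_ins_eq) (use bnd SM in auto)
  have cx: "cay (w @ [a])"
    unfolding cay_def
  proof (intro conjI allI impI)
    show "0 \<notin> set (w @ [a])" using v0 a1 unfolding wf f_def by auto
  next
    fix k assume k: "1 \<le> k \<and> k \<le> Max (insert 0 (set (w @ [a])))"
    then have k1: "1 \<le> k" "k \<le> Suc M" using Mx by auto
    consider "k < a" | "k = a" | "k > a" by linarith
    then show "k \<in> set (w @ [a])"
    proof cases
      case 1
      then have "k \<in> set v" using vall k1 aM by simp
      moreover have "f k = k" using 1 unfolding f_def by simp
      ultimately show ?thesis unfolding wf by force
    next
      case 2 then show ?thesis by simp
    next
      case 3
      then have "k - 1 \<in> set v" using vall k1 a1 by simp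
      moreover have "f (k - 1) = k" using 3 unfolding f_def by auto
      ultimately show ?thesis unfolding wf by force
    qed
  qed
  have lw: "last w = last v" using ne al unfolding wf f_def by (simp add: last_map)
  have aw: "a \<notin> set w" unfolding wf f_def by auto
  have ascx: "asc (w @ [a]) = Suc (asc v)"
    using asc_snoc[of w a] ne lw al asc_incr[of a v] unfolding w_def by (simp add: incr_from_def)
  have fo: "\<forall>p<length (w @ [a]). fo (w @ [a]) p \<longleftrightarrow> (p = 0 \<or> (w @ [a]) ! (p - 1) < (w @ [a]) ! p)"
    apply (rule fo_clause_snoc[where v=v])
    using g ne al aw lw unfolding good_def wf f_def by auto
  show ?thesis unfolding good_def w_def[symmetric] using cx Mx ascx MS fo by simp
qed

lemma modasc_good: "x \<in> modasc n \<Longrightarrow> good x"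
proof (induction n arbitrary: x rule: modasc.induct)
  case 1 then show ?case by (simp add: good_def cay_def asc_def)
next
  case 2 then show ?case using good_one by simp
next
  case (3 n)
  then obtain v a where v: "v \<in> modasc (Suc n)" and
    c: "(1 \<le> a \<and> a \<le> last v \<and> x = v @ [a]) \<or> (last v < a \<and> a \<le> 2 + asc v \<and> x = incr_from a v @ [a])"
    by auto
  have gv: "good v" using 3 v by blast
  have ne: "v \<noteq> []" using modasc_length[OF v] by auto
  from c show ?case using good_step1[OF gv ne] good_step2[OF gv ne] by auto
qed

lemma perm_map_Suc:
  assumes "distinct L" "set L = {0..<length L}"
  shows "is_perm (map Suc L)"
proof -
  have s: "set (map Suc L) = {1..length L}" using assms(2) by (auto simp: image_iff)
  show ?thesis unfolding is_perm_def cay_def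
  proof (intro conjI allI impI)
    show "0 \<notin> set (map Suc L)" by auto
    fix k assume k: "1 \<le> k \<and> k \<le> Max (insert 0 (set (map Suc L)))"
    have m: "Max (insert 0 (set (map Suc L))) \<le> length L" unfolding s by simp
    have "k \<le> length L" using k m by linarith
    then show "k \<in> set (map Suc L)" using k unfolding s by simp
  next
    show "distinct (map Suc L)" using assms(1) by (simp add: distinct_map)
  qed
qed

lemma fishburn_map_Suc:
  "fishburn (map Suc L) \<longleftrightarrow> is_perm (map Suc L) \<and>
     \<not> (\<exists>i k. Suc i < k \<and> k < length L \<and> L ! i < L ! Suc i \<and> L ! k + 1 = L ! i)"
  unfolding fishburn_def by (auto 0 4)

lemma good_fish:
  assumes g: "good x"
  shows "fishburn (gamma x)"
proof -
  define L where "L = Lx x"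
  define n where "n = length x"
  have lenL: "length L = n" unfolding L_def n_def by (simp add: Lx_length)
  have perm: "is_perm (map Suc L)"
    apply (rule perm_map_Suc) unfolding L_def by (auto simp: Lx_distinct Lx_set Lx_length)
  have inL: "\<And>s. s < n \<Longrightarrow> L ! s < n" unfolding L_def n_def by (rule Lx_nth_lt)
  have liff: "\<And>s t. s < n \<Longrightarrow> t < n \<Longrightarrow> s < t \<longleftrightarrow> kk x (L ! s) < kk x (L ! t)"
    unfolding L_def n_def by (rule Lx_less_iff)
  have kl: "\<And>i j. i < n \<Longrightarrow> j < n \<Longrightarrow> kk x i < kk x j \<longleftrightarrow> x ! i < x ! j \<or> (x ! i = x ! j \<and> j < i)"
    unfolding n_def by (rule kk_less)
  have fo: "\<And>p. p < n \<Longrightarrow> fo x p \<longleftrightarrow> (p = 0 \<or> x ! (p - 1) < x ! p)"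
    using g unfolding good_def n_def by blast
  have "\<not> (\<exists>i k. Suc i < k \<and> k < length L \<and> L ! i < L ! Suc i \<and> L ! k + 1 = L ! i)"
  proof
    assume "\<exists>i k. Suc i < k \<and> k < length L \<and> L ! i < L ! Suc i \<and> L ! k + 1 = L ! i"
    then obtain i k where ik: "Suc i < k" "k < n" "L ! i < L ! Suc i" "L ! k + 1 = L ! i"
      using lenL by blast
    define p where "p = L ! i"
    define q where "q = L ! Suc i"
    have pn: "p < n" "q < n" "L ! k < n" using inL ik unfolding p_def q_def by auto
    have pq: "p < q" using ik unfolding p_def q_def by simp
    have p0: "p \<noteq> 0" and r: "L ! k = p - 1" using ik unfolding p_def by auto
    have "kk x (L ! i) < kk x (L ! k)" using liff[of i k] ik by simp
    then have "kk x p < kk x (p - 1)" unfolding p_def[symmetric] r by simp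
    then have "\<not> x ! (p - 1) < x ! p" using kl[of p "p - 1"] pn r by auto
    then have "\<not> fo x p" using fo pn p0 by auto
    then obtain p' where p': "p' < p" "x ! p' = x ! p" unfolding fo_def by auto
    have "p' \<in> set L" unfolding L_def Lx_set using p' pn n_def by simp
    then obtain t where t: "t < n" "L ! t = p'" using lenL by (auto simp: in_set_conv_nth)
    have "kk x p < kk x p'" using kl[of p p'] p' pn by simp
    then have "i < t" using liff[of i t] t ik unfolding p_def by simp
    moreover have "t \<noteq> Suc i" using t p' pq unfolding q_def by auto
    ultimately have "Suc i < t" by simp
    then have "kk x q < kk x p'" using liff[of "Suc i" t] t ik unfolding q_def by simp
    then have "x ! q \<le> x ! p'" using kl[of q p'] pn p' by auto
    moreover have "kk x p < kk x q" using liff[of i "Suc i"] ik unfolding p_def q_def by simp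
    then have "x ! p < x ! q" using kl[of p q] pn pq by auto
    ultimately show False using p' by simp
  qed
  then show ?thesis unfolding gamma_Lx L_def[symmetric] fishburn_map_Suc using perm by simp
qed

definition fishL :: "nat list \<Rightarrow> bool" where
  "fishL L \<longleftrightarrow> \<not> (\<exists>i k. Suc i < k \<and> k < length L \<and> L ! i < L ! Suc i \<and> L ! k + 1 = L ! i)"

lemma Lx_snoc:
  assumes len: "length w = length v"
    and iso: "\<forall>i<length v. \<forall>j<length v. (w ! i < w ! j \<longleftrightarrow> v ! i < v ! j) \<and> (w ! i = w ! j \<longleftrightarrow> v ! i = v ! j)"
    and wa: "\<forall>i<length v. w ! i < a \<longleftrightarrow> v ! i < a"
  shows "Lx (w @ [a]) = filter (\<lambda>i. v ! i < a) (Lx v) @ length v # filter (\<lambda>i. \<not> v ! i < a) (Lx v)"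
proof (rule Lx_unique[symmetric])
  define m where "m = length v"
  define x where "x = w @ [a]"
  have lx: "length x = Suc m" unfolding x_def m_def using len by simp
  have xi: "\<And>i. i < m \<Longrightarrow> x ! i = w ! i" unfolding x_def m_def using len by (simp add: nth_append)
  have xm: "x ! m = a" unfolding x_def m_def using len by (simp add: nth_append)
  have sLv: "set (Lx v) = {0..<m}" unfolding m_def by (simp add: Lx_set)
  have kx: "\<And>i j. i < m \<Longrightarrow> j < m \<Longrightarrow> kk x i < kk x j \<longleftrightarrow> kk v i < kk v j"
  proof -
    fix i j assume ij: "i < m" "j < m"
    have "kk x i < kk x j \<longleftrightarrow> x ! i < x ! j \<or> (x ! i = x ! j \<and> j < i)"
      using kk_less[of i x j] ij lx by simp
    also have "\<dots> \<longleftrightarrow> v ! i < v ! j \<or> (v ! i = v ! j \<and> j < i)"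
      using xi ij iso unfolding m_def by auto
    also have "\<dots> \<longleftrightarrow> kk v i < kk v j" using kk_less[of i v j] ij unfolding m_def by simp
    finally show "kk x i < kk x j \<longleftrightarrow> kk v i < kk v j" .
  qed
  have sv: "sorted_wrt (\<lambda>i j. kk v i < kk v j) (Lx v)" by (rule Lx_sorted)
  have s1: "sorted_wrt (\<lambda>i j. kk x i < kk x j) (Lx v)"
    by (rule sorted_wrt_mono_rel[OF _ sv]) (use kx sLv in auto)
  show "distinct (filter (\<lambda>i. v ! i < a) (Lx v) @ length v # filter (\<lambda>i. \<not> v ! i < a) (Lx v))"
    using Lx_distinct[of v] sLv unfolding m_def by auto
  show "set (filter (\<lambda>i. v ! i < a) (Lx v) @ length v # filter (\<lambda>i. \<not> v ! i < a) (Lx v)) = {0..<length (w @ [a])}"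
    using sLv len unfolding m_def by auto
  show "sorted_wrt (\<lambda>i j. kk (w @ [a]) i < kk (w @ [a]) j)
     (filter (\<lambda>i. v ! i < a) (Lx v) @ length v # filter (\<lambda>i. \<not> v ! i < a) (Lx v))"
    unfolding x_def[symmetric] m_def[symmetric]
  proof (simp only: sorted_wrt_append sorted_wrt.simps, intro conjI ballI allI impI)
    show "sorted_wrt (\<lambda>i j. kk x i < kk x j) (filter (\<lambda>i. v ! i < a) (Lx v))"
      by (rule sorted_wrt_filter[OF s1])
    show "sorted_wrt (\<lambda>i j. kk x i < kk x j) (filter (\<lambda>i. \<not> v ! i < a) (Lx v))"
      by (rule sorted_wrt_filter[OF s1])
  next
    fix j assume j: "j \<in> set (filter (\<lambda>i. \<not> v ! i < a) (Lx v))"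
    then have "j < m" "\<not> w ! j < a" using sLv wa unfolding m_def by auto
    then show "kk x m < kk x j" using kk_less[of m x j] lx xi xm by auto
  next
    fix i y assume i: "i \<in> set (filter (\<lambda>i. v ! i < a) (Lx v))"
      and y: "y \<in> set (m # filter (\<lambda>i. \<not> v ! i < a) (Lx v))"
    have im: "i < m" "v ! i < a" "w ! i < a" using i sLv wa unfolding m_def by auto
    show "kk x i < kk x y"
    proof (cases "y = m")
      case True then show ?thesis using kk_less[of i x m] im lx xi xm by auto
    next
      case False
      then have ym: "y < m" "\<not> v ! y < a" using y sLv by auto
      then have "kk v i < kk v y" using kk_less[of i v y] im unfolding m_def by auto
      then show ?thesis using kx im ym by simp
    qed
  qed
qed

lemma fishL_remove:
  assumes d: "distinct (A @ m # B)" and sl: "\<forall>r\<in>set (A @ m # B). r \<le> m"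
    and f: "fishL (A @ m # B)"
  shows "fishL (A @ B)"
  unfolding fishL_def
proof
  define L where "L = A @ m # B"
  define L' where "L' = A @ B"
  define la where "la = length A"
  assume "\<exists>i k. Suc i < k \<and> k < length (A @ B) \<and> (A @ B) ! i < (A @ B) ! Suc i \<and> (A @ B) ! k + 1 = (A @ B) ! i"
  then obtain i k where ik: "Suc i < k" "k < length L'" "L' ! i < L' ! Suc i" "L' ! k + 1 = L' ! i"
    unfolding L'_def by blast
  have e1: "\<And>j. j < la \<Longrightarrow> L ! j = L' ! j" unfolding L_def L'_def la_def by (simp add: nth_append)
  have e2: "\<And>j. la \<le> j \<Longrightarrow> L ! Suc j = L' ! j" unfolding L_def L'_def la_def
    by (simp add: nth_append Suc_diff_le)
  have lL: "length L = Suc (length L')" unfolding L_def L'_def by simp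
  have Lla: "L ! la = m" unfolding L_def la_def by simp
  have viol: "\<exists>i k. Suc i < k \<and> k < length L \<and> L ! i < L ! Suc i \<and> L ! k + 1 = L ! i"
  proof (cases "la \<le> i")
    case True
    then show ?thesis using ik e2[of i] e2[of "Suc i"] e2[of k] lL
      by (intro exI[of _ "Suc i"] exI[of _ "Suc k"]) auto
  next
    case False
    note F = False
    show ?thesis
    proof (cases "Suc i < la")
      case True
      show ?thesis
      proof (cases "k < la")
        case True
        then show ?thesis using ik e1[of i] e1[of "Suc i"] e1[of k] lL \<open>Suc i < la\<close>
          by (intro exI[of _ i] exI[of _ k]) auto
      next
        case False
        then show ?thesis using ik e1[of i] e1[of "Suc i"] e2[of k] lL \<open>Suc i < la\<close>
          by (intro exI[of _ i] exI[of _ "Suc k"]) auto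
      qed
    next
      case False
      then have si: "Suc i = la" using F by simp
      have "L ! i \<in> set L" "L ! i \<noteq> m"
      proof -
        show "L ! i \<in> set L" using si lL ik by simp
        have "i < length L" "la < length L" using si lL ik by auto
        then show "L ! i \<noteq> m" using d si Lla unfolding L_def[symmetric] by (metis nth_eq_iff_index_eq n_not_Suc_n)
      qed
      then have "L ! i < m" using sl unfolding L_def by fastforce
      then show ?thesis using ik e1[of i] e2[of k] lL si Lla
        by (intro exI[of _ i] exI[of _ "Suc k"]) auto
    qed
  qed
  then show False using f unfolding fishL_def L_def by blast
qed

lemma fishL_last:
  assumes d: "distinct (A @ m # B)" and sl: "\<forall>r\<in>set (A @ m # B). r \<le> m"
    and f: "fishL (A @ m # B)" and ne: "A \<noteq> []" and p0: "last A \<noteq> 0"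
  shows "last A - 1 \<notin> set B"
proof
  assume "last A - 1 \<in> set B"
  then obtain j where j: "j < length B" "B ! j = last A - 1" by (auto simp: in_set_conv_nth)
  define L where "L = A @ m # B"
  define i where "i = length A - 1"
  have Li: "L ! i = last A" unfolding L_def i_def using ne by (simp add: nth_append last_conv_nth)
  have Lsi: "L ! Suc i = m" unfolding L_def i_def using ne by (simp add: nth_append)
  have Lk: "L ! (length A + 1 + j) = last A - 1" unfolding L_def using j by (simp add: nth_append)
  have "last A \<in> set A" using ne by simp
  moreover have "m \<notin> set A" using d by simp
  ultimately have "last A \<noteq> m" "last A \<le> m" using sl by auto
  then have "last A < m" by simp
  then have "Suc i < length A + 1 + j \<and> length A + 1 + j < length L \<and> L ! i < L ! Suc i \<and>
     L ! (length A + 1 + j) + 1 = L ! i"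
    using Li Lsi Lk j p0 ne unfolding L_def i_def by auto
  then show False using f unfolding fishL_def L_def by blast
qed

lemma surj_L:
  "length L = n \<Longrightarrow> distinct L \<Longrightarrow> set L = {0..<n} \<Longrightarrow> fishL L \<Longrightarrow> \<exists>x\<in>modasc n. Lx x = L"
proof (induction n arbitrary: L rule: modasc.induct)
  case 1 then show ?case by (simp add: Lx_def)
next
  case 2
  then have "L = [0]" by (cases L) auto
  then show ?case by (simp add: Lx_def)
next
  case (3 n)
  define m where "m = Suc n"
  have "m \<in> set L" using 3 unfolding m_def by simp
  then obtain A B where L: "L = A @ m # B" by (meson split_list)
  define L' where "L' = A @ B"
  have dL: "distinct L" using 3 by simp
  have lL': "length L' = Suc n" using 3 L unfolding L'_def by simp
  have dL': "distinct L'" using dL L unfolding L'_def by simp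
  have sL': "set L' = {0..<Suc n}"
  proof -
    have "set L' = set L - {m}" using dL L unfolding L'_def by auto
    then show ?thesis using 3 unfolding m_def by auto
  qed
  have slm: "\<forall>r\<in>set (A @ m # B). r \<le> m" using 3 L unfolding m_def by auto
  have fL: "fishL (A @ m # B)" using 3 L by simp
  have fL': "fishL L'" unfolding L'_def using fishL_remove[OF _ slm fL] dL L by simp
  obtain v where v: "v \<in> modasc (Suc n)" "Lx v = L'" using "3.IH"[OF lL' dL' sL' fL'] by blast
  have gv: "good v" using modasc_good[OF v(1)] .
  have lv: "length v = m" using modasc_length[OF v(1)] unfolding m_def .
  have nev: "v \<noteq> []" using lv unfolding m_def by auto
  have cv: "cay v" using gv good_def by blast
  have v0: "\<And>j. j < m \<Longrightarrow> v ! j \<ge> 1"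
  proof -
    fix j assume "j < m"
    then have "v ! j \<in> set v" using lv by simp
    then show "v ! j \<ge> 1" using cv unfolding cay_def by (metis less_one not_less)
  qed
  have lastv: "last v \<ge> 1" using v0[of "m - 1"] nev lv by (simp add: last_conv_nth m_def)
  have sw: "sorted_wrt (\<lambda>i j. kk v i < kk v j) (A @ B)"
    using Lx_sorted[of v] v(2) unfolding L'_def by simp
  have sAB: "set A \<union> set B = {0..<m}" using sL' unfolding L'_def m_def by simp
  have kl: "\<And>i j. i < m \<Longrightarrow> j < m \<Longrightarrow> kk v i < kk v j \<longleftrightarrow> v ! i < v ! j \<or> (v ! i = v ! j \<and> j < i)"
    using kk_less lv by metis
  define a where "a = (if A = [] then 1 else Suc (v ! last A))"
  have PA: "\<forall>i\<in>set A. v ! i < a" and PB: "\<forall>j\<in>set B. \<not> v ! j < a"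
  proof -
    have "(\<forall>i\<in>set A. v ! i < a) \<and> (\<forall>j\<in>set B. \<not> v ! j < a)"
    proof (cases "A = []")
      case True
      then show ?thesis unfolding a_def using v0 sAB by force
    next
      case False
      define p where "p = last A"
      have pA: "p \<in> set A" unfolding p_def using False by simp
      have pm: "p < m" using pA sAB by auto
      have A': "A = butlast A @ [p]" unfolding p_def using False by simp
      have sA: "sorted_wrt (\<lambda>i j. kk v i < kk v j) (butlast A @ [p])"
        using sw A' by (metis sorted_wrt_append)
      have bef: "\<And>i. i \<in> set (butlast A) \<Longrightarrow> kk v i < kk v p"
        using sA by (simp add: sorted_wrt_append)
      have aft: "\<And>j. j \<in> set B \<Longrightarrow> kk v p < kk v j"
        using sw pA by (simp add: sorted_wrt_append)
      have setA: "set A = insert p (set (butlast A))" using A' by (metis Un_insert_right append_Nil2 list.set(2) set_append)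
      have fop: "fo v p"
      proof (cases "p = 0")
        case True then show ?thesis unfolding fo_def by simp
      next
        case False
        have "p - 1 \<notin> set B" using fishL_last[OF _ slm fL \<open>A \<noteq> []\<close>] dL L False unfolding p_def by simp
        moreover have "p - 1 < m" using pm by simp
        ultimately have "p - 1 \<in> set A" using sAB by auto
        then have "p - 1 \<in> set (butlast A)" using setA False by auto
        then have "kk v (p - 1) < kk v p" by (rule bef)
        moreover have "p - 1 < m" using pm by simp
        ultimately have "v ! (p - 1) < v ! p" using kl[of "p - 1" p] pm False by auto
        then show ?thesis using gv pm lv unfolding good_def by auto
      qed
      have "\<forall>i\<in>set A. v ! i < a"
      proof
        fix i assume "i \<in> set A"
        then have "i = p \<or> i \<in> set (butlast A)" using setA by auto
        then show "v ! i < a"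
        proof
          assume "i \<in> set (butlast A)"
          then have "kk v i < kk v p" "i < m" using bef sAB setA by auto
          then show ?thesis using kl[of i p] pm unfolding a_def p_def using False by auto
        qed (simp add: a_def p_def False)
      qed
      moreover have "\<forall>j\<in>set B. \<not> v ! j < a"
      proof
        fix j assume j: "j \<in> set B"
        then have jm: "j < m" using sAB by auto
        have "kk v p < kk v j" using aft j by simp
        then have "v ! p < v ! j \<or> (v ! p = v ! j \<and> j < p)" using kl[of p j] pm jm by simp
        then have "v ! p < v ! j" using fop unfolding fo_def by auto
        then show "\<not> v ! j < a" unfolding a_def p_def using False by simp
      qed
      ultimately show ?thesis by blast
    qed
    then show "\<forall>i\<in>set A. v ! i < a" "\<forall>j\<in>set B. \<not> v ! j < a" by auto
  qed
  have fA: "filter (\<lambda>i. v ! i < a) (Lx v) = A" using PA PB v(2) unfolding L'_def by simp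
  have fB: "filter (\<lambda>i. \<not> v ! i < a) (Lx v) = B" using PA PB v(2) unfolding L'_def by simp
  show ?case
  proof (cases "a \<le> last v")
    case True
    have "Lx (v @ [a]) = L"
      using Lx_snoc[of v v a] fA fB L lv by simp
    moreover have "v @ [a] \<in> modasc (Suc (Suc n))"
      using v(1) True unfolding a_def by (auto split: if_splits)
    ultimately show ?thesis by blast
  next
    case False
    then have "A \<noteq> []" using lastv unfolding a_def by auto
    then have "last A \<in> set A" by simp
    then have "last A < m" using sAB by auto
    then have "v ! last A \<in> set v" using lv by simp
    then have "v ! last A \<le> Max (insert 0 (set v))" by simp
    then have a2: "a \<le> 2 + asc v" using gv nev \<open>A \<noteq> []\<close> unfolding good_def a_def by simp
    define w where "w = incr_from a v"
    have wn: "\<And>i. i < m \<Longrightarrow> w ! i = (if a \<le> v ! i then v ! i + 1 else v ! i)"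
      unfolding w_def incr_from_def using lv by simp
    have "Lx (w @ [a]) = L"
      using Lx_snoc[of w v a] fA fB L lv wn unfolding w_def incr_from_def by auto
    moreover have "w @ [a] \<in> modasc (Suc (Suc n))"
      using v(1) False a2 unfolding w_def modasc.simps by (intro CollectI bexI[of _ v] exI[of _ a]) auto
    ultimately show ?thesis by blast
  qed
qed

lemma perm_set:
  assumes "is_perm p"
  shows "set p = {1..length p}"
proof -
  define M where "M = Max (insert 0 (set p))"
  have c: "cay p" "distinct p" using assms is_perm_def by auto
  have s: "set p = {1..M}"
  proof
    show "set p \<subseteq> {1..M}" using c(1) unfolding cay_def M_def
      by (auto simp: Suc_le_eq)
    show "{1..M} \<subseteq> set p" using c(1) unfolding cay_def M_def by auto
  qed
  have "card (set p) = length p" using c(2) by (rule distinct_card)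
  then have "M = length p" using s by simp
  then show ?thesis using s by simp
qed

lemma fish_to_L:
  assumes "fishburn p"
  shows "\<exists>L. p = map Suc L \<and> distinct L \<and> set L = {0..<length L} \<and> fishL L"
proof -
  have ip: "is_perm p" using assms fishburn_def by blast
  have sp: "set p = {1..length p}" by (rule perm_set[OF ip])
  define L where "L = map (\<lambda>c. c - 1) p"
  have pL: "p = map Suc L" unfolding L_def using sp by (auto intro: map_idI[symmetric])
  have dL: "distinct L" using ip pL unfolding is_perm_def by (simp add: distinct_map)
  have sL: "set L = {0..<length L}"
  proof -
    have "Suc ` set L = Suc ` {0..<length L}" using sp pL by (simp add: image_Suc_atLeastLessThan atLeastLessThanSuc_atLeastAtMost)
    then show ?thesis by (metis inj_Suc inj_image_eq_iff)
  qed
  have "fishL L" using assms unfolding pL fishburn_map_Suc fishL_def by simp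
  then show ?thesis using pL dL sL by blast
qed

lemma Modasc_cay: "x \<in> Modasc \<Longrightarrow> cay x"
  unfolding Modasc_def using modasc_good good_def by blast

lemma gamma_Modasc: "gamma ` Modasc = {p. fishburn p}"
proof
  show "gamma ` Modasc \<subseteq> {p. fishburn p}"
    unfolding Modasc_def using modasc_good good_fish by blast
next
  show "{p. fishburn p} \<subseteq> gamma ` Modasc"
  proof
    fix p assume "p \<in> {p. fishburn p}"
    then obtain L where L: "p = map Suc L" "distinct L" "set L = {0..<length L}" "fishL L"
      using fish_to_L by blast
    obtain x where "x \<in> modasc (length L)" "Lx x = L" using surj_L[OF refl L(2-4)] by blast
    then have "x \<in> Modasc" "gamma x = p" unfolding Modasc_def using L(1) gamma_Lx by auto
    then show "p \<in> gamma ` Modasc" by blast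
  qed
qed

definition red :: "nat list \<Rightarrow> nat list" where
  "red w = map (\<lambda>c. card {u \<in> set w. u < c} + 1) w"

lemma red_mono:
  fixes w :: "nat list"
  assumes "c \<in> set w" "c' \<in> set w" "c < c'"
  shows "card {u \<in> set w. u < c} < card {u \<in> set w. u < c'}"
proof (rule psubset_card_mono)
  show "finite {u \<in> set w. u < c'}" by simp
  have "{u \<in> set w. u < c} \<subseteq> {u \<in> set w. u < c'}" using assms(3) by auto
  moreover have "c \<in> {u \<in> set w. u < c'}" "c \<notin> {u \<in> set w. u < c}" using assms by auto
  ultimately show "{u \<in> set w. u < c} < {u \<in> set w. u < c'}" by blast
qed

lemma red_iff:
  assumes "i < length w" "j < length w"
  shows "(red w ! i < red w ! j \<longleftrightarrow> w ! i < w ! j) \<and> (red w ! i = red w ! j \<longleftrightarrow> w ! i = w ! j)"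
proof -
  have a: "w ! i \<in> set w" "w ! j \<in> set w" using assms by auto
  have r: "red w ! i = card {u \<in> set w. u < w ! i} + 1" "red w ! j = card {u \<in> set w. u < w ! j} + 1"
    using assms unfolding red_def by auto
  consider "w ! i < w ! j" | "w ! i = w ! j" | "w ! j < w ! i" by linarith
  then show ?thesis
  proof cases
    case 1 then show ?thesis using red_mono[OF a 1] r by simp
  next
    case 2 then show ?thesis using r by simp
  next
    case 3 then show ?thesis using red_mono[OF a(2) a(1) 3] r by simp
  qed
qed

lemma red_length: "length (red w) = length w"
  unfolding red_def by simp

lemma red_cay: "cay (red w)"
proof -
  define S where "S = set w"
  define g where "g = (\<lambda>c. card {u \<in> S. u < c} + 1)"
  have sr: "set (red w) = g ` S" unfolding red_def g_def S_def by simp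
  have inj: "inj_on g S"
  proof (rule inj_onI)
    fix c c' assume "c \<in> S" "c' \<in> S" "g c = g c'"
    then show "c = c'" using red_mono[of c w c'] red_mono[of c' w c] unfolding g_def S_def
      by (cases "c < c'"; cases "c' < c") auto
  qed
  have sub: "g ` S \<subseteq> {1..card S}"
  proof
    fix y assume "y \<in> g ` S"
    then obtain c where c: "c \<in> S" "y = g c" by auto
    have "{u \<in> S. u < c} \<subset> S" using c by auto
    then have "card {u \<in> S. u < c} < card S" unfolding S_def by (intro psubset_card_mono) auto
    then show "y \<in> {1..card S}" using c unfolding g_def by auto
  qed
  have eq: "g ` S = {1..card S}"
    by (rule card_subset_eq) (use sub inj card_image in auto)
  show ?thesis unfolding cay_def sr eq
  proof (intro conjI allI impI)
    show "0 \<notin> {1..card S}" by simp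
    fix k assume "1 \<le> k \<and> k \<le> Max (insert 0 {1..card S})"
    moreover have "Max (insert 0 {1..card S}) \<le> card S" by simp
    ultimately have "k \<le> card S" by linarith
    then show "k \<in> {1..card S}" using \<open>1 \<le> k \<and> _\<close> by auto
  qed
qed

lemma strict_iff:
  fixes ix :: "nat list"
  assumes "sorted_wrt (<) ix" "c < length ix" "c' < length ix"
  shows "(ix ! c < ix ! c' \<longleftrightarrow> c < c') \<and> (ix ! c = ix ! c' \<longleftrightarrow> c = c')"
proof -
  have 1: "c < c' \<longleftrightarrow> ix ! c < ix ! c'" using sorted_wrt_less_iff[of "\<lambda>i. i" ix c c'] assms by simp
  have 2: "c' < c \<longleftrightarrow> ix ! c' < ix ! c" using sorted_wrt_less_iff[of "\<lambda>i. i" ix c' c] assms by simp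
  show ?thesis using 1 2 by (cases "c < c'"; cases "c' < c") auto
qed

lemma kk_sub:
  assumes srt: "sorted_wrt (<) ix" and lt: "\<forall>j\<in>set ix. j < length x" and lz: "length z = length ix"
    and iso: "\<forall>s<length ix. \<forall>t<length ix. (x ! (ix ! s) < x ! (ix ! t) \<longleftrightarrow> z ! s < z ! t) \<and>
                (x ! (ix ! s) = x ! (ix ! t) \<longleftrightarrow> z ! s = z ! t)"
    and c: "c < length ix" "c' < length ix"
  shows "kk z c < kk z c' \<longleftrightarrow> kk x (ix ! c) < kk x (ix ! c')"
proof -
  have b: "ix ! c < length x" "ix ! c' < length x" using lt c by auto
  have "kk z c < kk z c' \<longleftrightarrow> z ! c < z ! c' \<or> (z ! c = z ! c' \<and> c' < c)"
    using kk_less[of c z c'] c lz by simp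
  also have "\<dots> \<longleftrightarrow> x ! (ix ! c) < x ! (ix ! c') \<or> (x ! (ix ! c) = x ! (ix ! c') \<and> ix ! c' < ix ! c)"
  proof -
    have i1: "x ! (ix ! c) < x ! (ix ! c') \<longleftrightarrow> z ! c < z ! c'" using iso c by blast
    have i2: "x ! (ix ! c) = x ! (ix ! c') \<longleftrightarrow> z ! c = z ! c'" using iso c by blast
    have i3: "ix ! c' < ix ! c \<longleftrightarrow> c' < c" using strict_iff[OF srt c(2) c(1)] by blast
    show ?thesis using i1 i2 i3 by simp
  qed
  also have "\<dots> \<longleftrightarrow> kk x (ix ! c) < kk x (ix ! c')" using kk_less[of "ix ! c" x "ix ! c'"] b by simp
  finally show ?thesis .
qed

definition rk :: "nat list \<Rightarrow> nat \<Rightarrow> nat" where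
  "rk L j = (THE s. s < length L \<and> L ! s = j)"

lemma rk: "distinct L \<Longrightarrow> j \<in> set L \<Longrightarrow> rk L j < length L \<and> L ! (rk L j) = j"
  unfolding rk_def by (rule theI') (rule distinct_Ex1)

lemma rk_nth: "distinct L \<Longrightarrow> s < length L \<Longrightarrow> rk L (L ! s) = s"
  unfolding rk_def by (rule the_equality) (auto simp: nth_eq_iff_index_eq)

lemma gamma_length: "length (gamma x) = length x"
  by (simp add: gamma_Lx Lx_length)

lemma contains_fwd:
  assumes "contains z x"
  shows "contains (gamma z) (gamma x)"
proof -
  obtain ix where ix: "length ix = length z" "sorted_wrt (<) ix" "\<forall>j\<in>set ix. j < length x"
    "\<forall>s<length z. \<forall>t<length z. (x ! (ix ! s) < x ! (ix ! t) \<longleftrightarrow> z ! s < z ! t) \<and>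
        (x ! (ix ! s) = x ! (ix ! t) \<longleftrightarrow> z ! s = z ! t)"
    using assms unfolding contains_def by blast
  define k where "k = length z"
  define n where "n = length x"
  define Lz where "Lz = Lx z"
  define LX where "LX = Lx x"
  define J where "J = (\<lambda>b. ix ! (Lz ! b))"
  define ps where "ps = map (\<lambda>b. rk LX (J b)) [0..<k]"
  have Lzk: "\<And>b. b < k \<Longrightarrow> Lz ! b < k" unfolding Lz_def k_def by (rule Lx_nth_lt)
  have Jn: "\<And>b. b < k \<Longrightarrow> J b < n" unfolding J_def n_def using ix Lzk k_def by auto
  have JL: "\<And>b. b < k \<Longrightarrow> J b \<in> set LX" unfolding LX_def Lx_set using Jn n_def by simp
  have rkJ: "\<And>b. b < k \<Longrightarrow> rk LX (J b) < n \<and> LX ! rk LX (J b) = J b"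
    using rk[OF _ JL] Lx_distinct Lx_length unfolding LX_def n_def by metis
  have kks: "\<And>c c'. c < k \<Longrightarrow> c' < k \<Longrightarrow> kk z c < kk z c' \<longleftrightarrow> kk x (ix ! c) < kk x (ix ! c')"
    using kk_sub[OF ix(2) ix(3)] ix(1) ix(4) unfolding k_def by simp
  have psb: "\<And>b. b < k \<Longrightarrow> ps ! b = rk LX (J b)" unfolding ps_def by simp
  have ord: "\<And>b b'. b < k \<Longrightarrow> b' < k \<Longrightarrow> ps ! b < ps ! b' \<longleftrightarrow> b < b'"
  proof -
    fix b b' assume bb: "b < k" "b' < k"
    have "ps ! b < ps ! b' \<longleftrightarrow> kk x (LX ! (ps ! b)) < kk x (LX ! (ps ! b'))"
      using Lx_less_iff[of "ps ! b" x "ps ! b'"] psb rkJ bb unfolding LX_def n_def by simp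
    also have "\<dots> \<longleftrightarrow> kk x (J b) < kk x (J b')" using psb rkJ bb by simp
    also have "\<dots> \<longleftrightarrow> kk z (Lz ! b) < kk z (Lz ! b')" unfolding J_def using kks Lzk bb by simp
    also have "\<dots> \<longleftrightarrow> b < b'" using Lx_less_iff[of b z b'] bb unfolding Lz_def k_def by simp
    finally show "ps ! b < ps ! b' \<longleftrightarrow> b < b'" .
  qed
  show ?thesis unfolding contains_def
  proof (intro exI[of _ ps] conjI ballI allI impI)
    show "length ps = length (gamma z)" unfolding ps_def k_def by (simp add: gamma_length)
    show "sorted_wrt (<) ps" unfolding sorted_wrt_iff_nth_less using ord by (simp add: ps_def)
  next
    fix j assume "j \<in> set ps"
    then show "j < length (gamma x)" using rkJ unfolding ps_def gamma_length n_def by auto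
  next
    fix s t assume st: "s < length (gamma z)" "t < length (gamma z)"
    then have st': "s < k" "t < k" unfolding k_def gamma_length by auto
    have gx: "gamma x ! (ps ! s) = Suc (J s)" "gamma x ! (ps ! t) = Suc (J t)"
      using psb rkJ st' unfolding gamma_Lx LX_def n_def by (auto simp: Lx_length)
    have gz: "gamma z ! s = Suc (Lz ! s)" "gamma z ! t = Suc (Lz ! t)"
      using st' unfolding gamma_Lx Lz_def k_def by (auto simp: Lx_length)
    have si: "(ix ! (Lz ! s) < ix ! (Lz ! t) \<longleftrightarrow> Lz ! s < Lz ! t) \<and> (ix ! (Lz ! s) = ix ! (Lz ! t) \<longleftrightarrow> Lz ! s = Lz ! t)"
      using strict_iff[OF ix(2)] Lzk st' ix(1) k_def by simp
    show "(gamma x ! (ps ! s) < gamma x ! (ps ! t)) = (gamma z ! s < gamma z ! t)"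
      using gx gz si unfolding J_def by simp
    show "(gamma x ! (ps ! s) = gamma x ! (ps ! t)) = (gamma z ! s = gamma z ! t)"
      using gx gz si unfolding J_def by simp
  qed
qed

lemma contains_bwd:
  assumes "contains (gamma y) (gamma x)"
  shows "\<exists>z. cay z \<and> gamma z = gamma y \<and> contains z x"
proof -
  define k where "k = length y"
  define n where "n = length x"
  define Ly where "Ly = Lx y"
  define LX where "LX = Lx x"
  obtain ps where ps: "length ps = k" "sorted_wrt (<) ps" "\<forall>j\<in>set ps. j < n"
    "\<forall>s<k. \<forall>t<k. (gamma x ! (ps ! s) < gamma x ! (ps ! t) \<longleftrightarrow> gamma y ! s < gamma y ! t)"
    using assms unfolding contains_def k_def n_def gamma_length by blast
  define J where "J = (\<lambda>b. LX ! (ps ! b))"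
  have psn: "\<And>b. b < k \<Longrightarrow> ps ! b < n" using ps by auto
  have Jn: "\<And>b. b < k \<Longrightarrow> J b < n" unfolding J_def LX_def n_def using psn n_def Lx_nth_lt by simp
  have gxJ: "\<And>b. b < k \<Longrightarrow> gamma x ! (ps ! b) = Suc (J b)"
    unfolding J_def LX_def gamma_Lx using psn n_def by (simp add: Lx_length)
  have gyL: "\<And>b. b < k \<Longrightarrow> gamma y ! b = Suc (Ly ! b)"
    unfolding Ly_def gamma_Lx k_def by (simp add: Lx_length)
  have Jord: "\<And>b b'. b < k \<Longrightarrow> b' < k \<Longrightarrow> J b < J b' \<longleftrightarrow> Ly ! b < Ly ! b'"
    using ps(4) gxJ gyL by fastforce
  have dLy: "distinct Ly" and lLy: "length Ly = k" and sLy: "set Ly = {0..<k}"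
    unfolding Ly_def k_def by (auto simp: Lx_distinct Lx_length Lx_set)
  define ix where "ix = map (\<lambda>a. J (rk Ly a)) [0..<k]"
  have rka: "\<And>a. a < k \<Longrightarrow> rk Ly a < k \<and> Ly ! rk Ly a = a" using rk[OF dLy] sLy lLy by auto
  have lix: "length ix = k" unfolding ix_def by simp
  have ixn: "\<And>a. a < k \<Longrightarrow> ix ! a = J (rk Ly a)" unfolding ix_def by simp
  have six: "sorted_wrt (<) ix"
    unfolding sorted_wrt_iff_nth_less
  proof (intro allI impI)
    fix a a' assume "a < a'" "a' < length ix"
    then show "ix ! a < ix ! a'" using Jord[of "rk Ly a" "rk Ly a'"] rka ixn lix by auto
  qed
  have ixlt: "\<forall>j\<in>set ix. j < length x" unfolding ix_def n_def[symmetric] using Jn rka by auto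
  define w where "w = map (\<lambda>a. x ! (ix ! a)) [0..<k]"
  define z where "z = red w"
  have lz: "length z = k" unfolding z_def w_def red_length by simp
  have ziso: "\<forall>s<length ix. \<forall>t<length ix. (x ! (ix ! s) < x ! (ix ! t) \<longleftrightarrow> z ! s < z ! t) \<and>
        (x ! (ix ! s) = x ! (ix ! t) \<longleftrightarrow> z ! s = z ! t)"
    using red_iff[of _ w] unfolding z_def lix w_def by auto
  have cz: "contains z x" unfolding contains_def
    using lz lix six ixlt ziso by (intro exI[of _ ix]) auto
  have kks: "\<And>c c'. c < k \<Longrightarrow> c' < k \<Longrightarrow> kk z c < kk z c' \<longleftrightarrow> kk x (ix ! c) < kk x (ix ! c')"
    using kk_sub[OF six ixlt] lz lix ziso by simp
  have "Ly = Lx z"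
  proof (rule Lx_unique)
    show "distinct Ly" by (rule dLy)
    show "set Ly = {0..<length z}" using sLy lz by simp
    show "sorted_wrt (\<lambda>i j. kk z i < kk z j) Ly"
      unfolding sorted_wrt_iff_nth_less
    proof (intro allI impI)
      fix b b' assume bb: "b < b'" "b' < length Ly"
      then have b: "b < k" "b' < k" using lLy by auto
      have Lyk: "Ly ! b < k" "Ly ! b' < k" using b sLy lLy nth_mem by fastforce+
      have e: "ix ! (Ly ! b) = J b" "ix ! (Ly ! b') = J b'" using ixn Lyk rk_nth[OF dLy] b lLy by auto
      have "kk z (Ly ! b) < kk z (Ly ! b') \<longleftrightarrow> kk x (J b) < kk x (J b')" using kks Lyk e by simp
      also have "\<dots> \<longleftrightarrow> ps ! b < ps ! b'"
        using Lx_less_iff[of "ps ! b" x "ps ! b'"] psn b unfolding J_def LX_def n_def by simp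
      also have "\<dots> \<longleftrightarrow> b < b'" using strict_iff[OF ps(2)] ps(1) b by simp
      finally show "kk z (Ly ! b) < kk z (Ly ! b')" using bb by simp
    qed
  qed
  then have "gamma z = gamma y" unfolding gamma_Lx Ly_def by simp
  moreover have "cay z" unfolding z_def by (rule red_cay)
  ultimately show ?thesis using cz by blast
qed

lemma perm_inv_props:
  assumes ip: "is_perm \<sigma>"
  shows "cay (perm_inv \<sigma>) \<and> gamma (perm_inv \<sigma>) = \<sigma>"
proof -
  define n where "n = length \<sigma>"
  have sp: "set \<sigma> = {1..n}" using perm_set[OF ip] n_def by simp
  have ds: "distinct \<sigma>" using ip is_perm_def by blast
  have rks: "\<And>j. 1 \<le> j \<Longrightarrow> j \<le> n \<Longrightarrow> rk \<sigma> j < n \<and> \<sigma> ! rk \<sigma> j = j"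
    using rk[OF ds] sp n_def by auto
  define L2 where "L2 = map (rk \<sigma>) [1..<Suc n]"
  have tau: "perm_inv \<sigma> = map Suc L2" unfolding perm_inv_def L2_def rk_def n_def by simp
  have lL2: "length L2 = n" unfolding L2_def by simp
  have dL2: "distinct L2" unfolding L2_def
  proof (rule distinct_map[THEN iffD2], intro conjI)
    show "distinct [1..<Suc n]" by simp
    show "inj_on (rk \<sigma>) (set [1..<Suc n])"
    proof (rule inj_onI)
      fix a b assume ab: "a \<in> set [1..<Suc n]" "b \<in> set [1..<Suc n]" "rk \<sigma> a = rk \<sigma> b"
      have a: "1 \<le> a" "a \<le> n" "1 \<le> b" "b \<le> n" using ab(1,2) by auto
      have "\<sigma> ! rk \<sigma> a = a" using rks[OF a(1,2)] by simp
      moreover have "\<sigma> ! rk \<sigma> b = b" using rks[OF a(3,4)] by simp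
      ultimately show "a = b" using ab(3) by metis
    qed
  qed
  have sL2: "set L2 = {0..<n}"
  proof
    show "set L2 \<subseteq> {0..<n}" unfolding L2_def using rks by auto
    show "{0..<n} \<subseteq> set L2"
    proof
      fix i assume i: "i \<in> {0..<n}"
      then have "\<sigma> ! i \<in> {1..n}" using sp n_def by (metis atLeastLessThan_iff nth_mem)
      then have "\<sigma> ! i \<in> set [1..<Suc n]" by auto
      moreover have "rk \<sigma> (\<sigma> ! i) = i" using rk_nth[OF ds] i n_def by simp
      ultimately show "i \<in> set L2" unfolding L2_def by (metis image_eqI set_map)
    qed
  qed
  have cay: "cay (perm_inv \<sigma>)" using perm_map_Suc[OF dL2] sL2 lL2 tau is_perm_def by simp
  define L where "L = map (\<lambda>c. c - 1) \<sigma>"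
  have sL: "\<sigma> = map Suc L" unfolding L_def using sp by (auto intro: map_idI[symmetric])
  have dL: "distinct L" using ds sL by (simp add: distinct_map)
  have lL: "length L = n" unfolding L_def n_def by simp
  have setL: "set L = {0..<n}"
  proof -
    have "Suc ` set L = Suc ` {0..<n}" using sp sL by (simp add: image_Suc_atLeastLessThan atLeastLessThanSuc_atLeastAtMost)
    then show ?thesis by (metis inj_Suc inj_image_eq_iff)
  qed
  define \<tau> where "\<tau> = perm_inv \<sigma>"
  have lt: "length \<tau> = n" using lL2 unfolding \<tau>_def tau by simp
  have tv: "\<And>s. s < n \<Longrightarrow> \<tau> ! (L ! s) = Suc s"
  proof -
    fix s assume s: "s < n"
    have Ls: "L ! s < n" using s setL lL nth_mem by fastforce
    have "\<sigma> ! s = Suc (L ! s)" using sL s lL by simp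
    moreover have "[1..<Suc n] ! (L ! s) = Suc (L ! s)" using Ls by (simp del: upt_Suc add: nth_upt)
    ultimately have "[1..<Suc n] ! (L ! s) = \<sigma> ! s" by simp
    then have "L2 ! (L ! s) = rk \<sigma> (\<sigma> ! s)" unfolding L2_def using Ls by (simp del: upt_Suc)
    then show "\<tau> ! (L ! s) = Suc s" unfolding \<tau>_def tau using rk_nth[OF ds] s n_def Ls lL2 by simp
  qed
  have "L = Lx \<tau>"
  proof (rule Lx_unique)
    show "distinct L" by (rule dL)
    show "set L = {0..<length \<tau>}" using setL lt by simp
    show "sorted_wrt (\<lambda>i j. kk \<tau> i < kk \<tau> j) L"
      unfolding sorted_wrt_iff_nth_less
    proof (intro allI impI)
      fix s t assume st: "s < t" "t < length L"
      then have "L ! s < n" "L ! t < n" using setL lL nth_mem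
        by (metis atLeastLessThan_iff order.strict_trans)+
      then show "kk \<tau> (L ! s) < kk \<tau> (L ! t)" using kk_less[of "L ! s" \<tau> "L ! t"] tv st lL lt by simp
    qed
  qed
  then have "gamma \<tau> = \<sigma>" using sL gamma_Lx by simp
  then show ?thesis using cay \<tau>_def by simp
qed

theorem theorem5p1:
  shows "(\<forall>\<sigma>. is_perm \<sigma> \<longrightarrow> Fish_av \<sigma> = gamma ` avoid_cls Modasc (perm_inv \<sigma>)) \<and>
         (\<forall>y. cay y \<longrightarrow> gamma ` avoid_cls Modasc y = Fish_av (gamma y))"
proof -
  have P2: "gamma ` avoid_cls Modasc y = Fish_av (gamma y)" for y
  proof -
    have "avoid_cls Modasc y = {x \<in> Modasc. \<not> contains (gamma y) (gamma x)}"
    proof -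
      have "(\<forall>z\<in>cls y. avoids x z) \<longleftrightarrow> \<not> contains (gamma y) (gamma x)" for x
      proof
        assume "\<forall>z\<in>cls y. avoids x z"
        then show "\<not> contains (gamma y) (gamma x)"
          using contains_bwd[of y x] unfolding cls_def Cay_def avoids_def by auto
      next
        assume "\<not> contains (gamma y) (gamma x)"
        then show "\<forall>z\<in>cls y. avoids x z"
          using contains_fwd unfolding cls_def avoids_def by fastforce
      qed
      then show ?thesis unfolding avoid_cls_def by auto
    qed
    then have "gamma ` avoid_cls Modasc y = {p \<in> gamma ` Modasc. \<not> contains (gamma y) p}" by auto
    also have "\<dots> = Fish_av (gamma y)" unfolding gamma_Modasc Fish_av_def avoids_def by auto
    finally show ?thesis .
  qed
  show ?thesis
  proof (intro conjI allI impI)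
    fix \<sigma> assume "is_perm \<sigma>"
    then have "gamma (perm_inv \<sigma>) = \<sigma>" using perm_inv_props by blast
    then show "Fish_av \<sigma> = gamma ` avoid_cls Modasc (perm_inv \<sigma>)" using P2[of "perm_inv \<sigma>"] by simp
  next
    fix y :: "nat list" assume "cay y"
    show "gamma ` avoid_cls Modasc y = Fish_av (gamma y)" by (rule P2)
  qed
qed

end
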